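(* Let $T$ be a TCD map on a BTB graph $G$, and let $\tilde T$ be obtained from $T$ by a resplit at $w_0$, with notation $w_0,w_1,w_2,w_3,w_4,\tilde w_0$ as in the context. Then $$\mathrm{mr}\bigl(T(w_1),T(w_0),T(w_2),T(w_3),\tilde T(\tilde w_0),T(w_4)\bigr)=-1.$$
   Context: A BTB graph is a planar bipartite graph (black $B$, white $W$) in a disk or cactus with all black vertices of degree $3$. A TCD map is $T:W\to\mathbb{CP}^d$ such that the neighbours of each black vertex have pairwise distinct collinear images. Resplit. Let $w_0$ be an internal white vertex of degree $2$ with black neighbours $b$ (other neighbours $w_1,w_2$) and $b'$ (other neighbours $w_3,w_4$), labelled so that $w_1,w_4$ lie on one face containing $b,w_0,b'$ and $w_2,w_3$ on the other. The resplit replaces $w_0,b,b'$ by a white vertex $\tilde w_0$ and black vertices adjacent to $\{\tilde w_0,w_1,w_4\}$ and $\{\tilde w_0,w_2,w_3\}$. Choose lifts $V(w)$ of the points and write the collinearity relations as $V(w_0)=\alpha_1V(w_1)+\alpha_2V(w_2)=\alpha_3V(w_3)+\alpha_4V(w_4)$. Then $\tilde T(\tilde w_0)=[\alpha_1V(w_1)-\alpha_4V(w_4)]=[\alpha_3V(w_3)-\alpha_2V(w_2)]$, and all other points are unchanged. The move is assumed defined, i.e. $T(w_1)\ne T(w_4)$ and $T(w_2)\ne T(w_3)$. Multi-ratio: for points $P_1,P_{1,2},P_2,P_{2,3},P_3,P_{3,1}$ with $P_{i,i+1}$ on line $P_iP_{i+1}$, $\mathrm{mr}=\prod_{i=1}^3(P_i-P_{i,i+1})/(P_{i,i+1}-P_{i+1})$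 (indices mod $3$), computed in any affine chart containing all points. *)

theory Defs
  imports "HOL-Analysis.Analysis"
begin

text \<open>Points of CP^d are represented by nonzero lifts in complex^'n (with CARD('n) = d+1).
  Two nonzero lifts represent the same point iff they are proportional.\<close>
definition proj_eq :: "complex^'n \<Rightarrow> complex^'n \<Rightarrow> bool" where
  "proj_eq u v \<longleftrightarrow> (\<exists>c. c \<noteq> 0 \<and> u = c *s v)"

text \<open>An affine chart is given by a (complex-linear) functional, represented by a covector a;
  the chart is the affine hyperplane a.V = 1, which contains the point [V] iff a.V \<noteq> 0.\<close>
definition chart_val :: "complex^'n \<Rightarrow> complex^'n \<Rightarrow> complex" where
  "chart_val a V = (\<Sum>i\<in>UNIV. a $ i * V $ i)"

definition in_chart :: "complex^'n \<Rightarrow> complex^'n \<Rightarrow> bool" where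
  "in_chart a V \<longleftrightarrow> chart_val a V \<noteq> 0"

definition chart_pt :: "complex^'n \<Rightarrow> complex^'n \<Rightarrow> complex^'n" where
  "chart_pt a V = (1 / chart_val a V) *s V"

definition seg_ratio :: "complex^'n \<Rightarrow> complex^'n \<Rightarrow> complex^'n \<Rightarrow> complex" where
  "seg_ratio P Q R = (THE t. P - Q = t *s (Q - R))"

definition multi_ratio ::
  "complex^'n \<Rightarrow> complex^'n \<Rightarrow> complex^'n \<Rightarrow> complex^'n \<Rightarrow> complex^'n \<Rightarrow> complex^'n \<Rightarrow> complex^'n \<Rightarrow> complex" where
  "multi_ratio a V1 V12 V2 V23 V3 V31 =
     seg_ratio (chart_pt a V1) (chart_pt a V12) (chart_pt a V2) *
     seg_ratio (chart_pt a V2) (chart_pt a V23) (chart_pt a V3) *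
     seg_ratio (chart_pt a V3) (chart_pt a V31) (chart_pt a V1)"

end

theory Submission
  imports Defs
begin

lemma cv_lin: "chart_val a (x *s U + y *s V) = x * chart_val a U + y * chart_val a V"
  unfolding chart_val_def
  by (simp add: sum_distrib_left sum.distrib algebra_simps)

lemma cv_scale: "chart_val a (x *s U) = x * chart_val a U"
  unfolding chart_val_def by (simp add: sum_distrib_left algebra_simps)

lemma pt_neq:
  assumes "chart_val a U \<noteq> 0" "chart_val a V \<noteq> 0" "\<not> proj_eq U V"
  shows "chart_pt a U \<noteq> chart_pt a V"
proof
  assume h: "chart_pt a U = chart_pt a V"
  have "U = (chart_val a U) *s chart_pt a U"
    using assms(1) by (simp add: chart_pt_def)
  also have "\<dots> = (chart_val a U / chart_val a V) *s V"
    using h assms(2) by (simp add: chart_pt_def)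
  finally have "U = (chart_val a U / chart_val a V) *s V" .
  moreover have "chart_val a U / chart_val a V \<noteq> 0" using assms by simp
  ultimately show False using assms(3) unfolding proj_eq_def by blast
qed

lemma seg_gen:
  assumes Q: "VQ = x *s VP + y *s VR"
    and nz: "chart_val a VP \<noteq> 0" "chart_val a VR \<noteq> 0" "chart_val a VQ \<noteq> 0"
    and xy: "x \<noteq> 0" "y \<noteq> 0"
    and ne: "chart_pt a VP \<noteq> chart_pt a VR"
  shows "seg_ratio (chart_pt a VP) (chart_pt a VQ) (chart_pt a VR)
         = y * chart_val a VR / (x * chart_val a VP)"
proof -
  define lP where "lP = chart_val a VP"
  define lR where "lR = chart_val a VR"
  define lQ where "lQ = chart_val a VQ"
  define p where "p = chart_pt a VP"
  define r where "r = chart_pt a VR"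
  have lQ: "lQ = x * lP + y * lR" unfolding lQ_def lP_def lR_def Q by (rule cv_lin)
  have VP: "VP = lP *s p" using nz(1) by (simp add: p_def chart_pt_def lP_def)
  have VR: "VR = lR *s r" using nz(2) by (simp add: r_def chart_pt_def lR_def)
  have q: "chart_pt a VQ = (x * lP / lQ) *s p + (y * lR / lQ) *s r"
  proof -
    have "chart_pt a VQ = (1/lQ) *s VQ" by (simp add: chart_pt_def lQ_def)
    also have "\<dots> = (1/lQ) *s (x *s (lP *s p) + y *s (lR *s r))" using Q VP VR by simp
    finally show ?thesis by (simp add: vector_add_ldistrib vector_smult_assoc)
  qed
  have lQ0: "lQ \<noteq> 0" using nz(3) lQ_def by simp
  have s1: "x * lP / lQ = 1 - y * lR / lQ" using lQ lQ0 by (simp add: field_simps)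
  have e1: "p - chart_pt a VQ = (y * lR / lQ) *s (p - r)"
    unfolding q vec_eq_iff s1 by (simp add: algebra_simps)
  have s2: "y * lR / lQ = 1 - x * lP / lQ" using lQ lQ0 by (simp add: field_simps)
  have e2: "chart_pt a VQ - r = (x * lP / lQ) *s (p - r)"
    unfolding q vec_eq_iff s2 by (simp add: algebra_simps)
  have pr: "p - r \<noteq> 0" using ne p_def r_def by simp
  have c: "x * lP / lQ \<noteq> 0" using xy nz unfolding lP_def lQ_def by simp
  show ?thesis
    unfolding p_def[symmetric] r_def[symmetric] lP_def[symmetric] lR_def[symmetric] seg_ratio_def
  proof (rule the_equality)
    show "p - chart_pt a VQ = (y * lR / (x * lP)) *s (chart_pt a VQ - r)"
      unfolding e1 e2 using c nz(3) unfolding lQ_def[symmetric] by (simp add: vector_smult_assoc)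
  next
    fix t assume "p - chart_pt a VQ = t *s (chart_pt a VQ - r)"
    then have "(y * lR / lQ) *s (p - r) = (t * (x * lP / lQ)) *s (p - r)"
      unfolding e1 e2 by (simp add: vector_smult_assoc)
    then have "y * lR / lQ = t * (x * lP / lQ)" using pr
      by (metis vector_mul_rcancel)
    then show "t = y * lR / (x * lP)" using c nz(3) unfolding lQ_def[symmetric] by (auto simp: field_simps)
  qed
qed

lemma nprop_comb:
  assumes "\<not> proj_eq U V" "V \<noteq> 0" "U \<noteq> 0" "W = s *s U + t *s V" "s \<noteq> 0"
  shows "\<not> proj_eq V W"
proof
  assume "proj_eq V W"
  then obtain c where c: "c \<noteq> 0" "V = c *s W" unfolding proj_eq_def by blast
  then have "V = (c * s) *s U + (c * t) *s V" using assms(4)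
    by (simp add: vector_add_ldistrib vector_smult_assoc)
  then have h: "(1 - c * t) *s V = (c * s) *s U"
    by (simp add: vector_sub_rdistrib algebra_simps)
  moreover have "1 - c * t \<noteq> 0"
  proof
    assume "1 - c * t = 0"
    with \<open>(1 - c * t) *s V = (c * s) *s U\<close> have "(c * s) *s U = 0" by simp
    then show False using c assms(3,5) by (simp add: vec_eq_iff)
  qed
  ultimately have "U = ((1 - c * t) / (c * s)) *s V" using c assms(5)
  proof -
    have "U = (1 / (c * s)) *s ((c * s) *s U)" using c assms(5) by (simp add: vector_smult_assoc)
    also have "\<dots> = (1 / (c * s)) *s ((1 - c * t) *s V)" 
      by (simp only: h)
    finally have "U = (1 / (c * s) * (1 - c * t)) *s V" by (simp only: vector_smult_assoc)
    then show ?thesis by simp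
  qed
  moreover have "(1 - c * t) / (c * s) \<noteq> 0" using \<open>1 - c * t \<noteq> 0\<close> c assms(5) by simp
  ultimately show False using assms(1) unfolding proj_eq_def by blast
qed

lemma coef_nz:
  assumes "V0 = s *s U + t *s V" "\<not> proj_eq V0 V" "V0 \<noteq> 0"
  shows "s \<noteq> 0"
proof
  assume "s = 0"
  then have "V0 = t *s V" using assms(1) by simp
  moreover have "t \<noteq> 0" using assms(3) calculation by auto
  ultimately show False using assms(2) unfolding proj_eq_def by blast
qed

theorem proposition5p5:
  fixes V0 V1 V2 V3 V4 a :: "complex^'n" and \<alpha>1 \<alpha>2 \<alpha>3 \<alpha>4 :: complex
  assumes lifts: "V0 \<noteq> 0" "V1 \<noteq> 0" "V2 \<noteq> 0" "V3 \<noteq> 0" "V4 \<noteq> 0"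
    and tcd_b: "\<not> proj_eq V0 V1" "\<not> proj_eq V0 V2" "\<not> proj_eq V1 V2"
    and tcd_b': "\<not> proj_eq V0 V3" "\<not> proj_eq V0 V4" "\<not> proj_eq V3 V4"
    and rel_b: "V0 = \<alpha>1 *s V1 + \<alpha>2 *s V2"
    and rel_b': "V0 = \<alpha>3 *s V3 + \<alpha>4 *s V4"
    and defined: "\<not> proj_eq V1 V4" "\<not> proj_eq V2 V3"
    and chart: "in_chart a V1" "in_chart a V0" "in_chart a V2" "in_chart a V3"
      "in_chart a (\<alpha>1 *s V1 - \<alpha>4 *s V4)" "in_chart a V4"
  shows "multi_ratio a V1 V0 V2 V3 (\<alpha>1 *s V1 - \<alpha>4 *s V4) V4 = -1"
proof -
  define W where "W = \<alpha>1 *s V1 - \<alpha>4 *s V4"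
  have a1: "\<alpha>1 \<noteq> 0" using coef_nz[OF rel_b tcd_b(2) lifts(1)] .
  have a2: "\<alpha>2 \<noteq> 0" using coef_nz[of V0 \<alpha>2 V2 \<alpha>1 V1] rel_b tcd_b(1) lifts(1) by (simp add: add.commute)
  have a3: "\<alpha>3 \<noteq> 0" using coef_nz[OF rel_b' tcd_b'(2) lifts(1)] .
  have a4: "\<alpha>4 \<noteq> 0" using coef_nz[of V0 \<alpha>4 V4 \<alpha>3 V3] rel_b' tcd_b'(1) lifts(1) by (simp add: add.commute)
  have W2: "W = \<alpha>3 *s V3 - \<alpha>2 *s V2"
    using rel_b rel_b' unfolding W_def vec_eq_iff by (auto simp: algebra_simps)
  have lW: "chart_val a W \<noteq> 0" using chart(5) unfolding W_def in_chart_def by simp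
  have l1: "chart_val a V1 \<noteq> 0" and l0: "chart_val a V0 \<noteq> 0" and l2: "chart_val a V2 \<noteq> 0"
    and l3: "chart_val a V3 \<noteq> 0" and l4: "chart_val a V4 \<noteq> 0"
    using chart unfolding in_chart_def by auto
  have W0: "W \<noteq> 0" using lW unfolding chart_val_def by auto
  have r1: "seg_ratio (chart_pt a V1) (chart_pt a V0) (chart_pt a V2)
      = \<alpha>2 * chart_val a V2 / (\<alpha>1 * chart_val a V1)"
    by (rule seg_gen[OF rel_b l1 l2 l0 a1 a2 pt_neq[OF l1 l2 tcd_b(3)]])
  have V3e: "V3 = (\<alpha>2 / \<alpha>3) *s V2 + (1 / \<alpha>3) *s W"
    using a3 unfolding W2 vec_eq_iff by (simp add: field_simps)
  have W2': "W = \<alpha>3 *s V3 + (- \<alpha>2) *s V2" using W2 by (simp add: vec_eq_iff)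
  have d2: "\<not> proj_eq V3 V2"
  proof
    assume "proj_eq V3 V2"
    then obtain c where "c \<noteq> 0" "V3 = c *s V2" unfolding proj_eq_def by blast
    then have "V2 = (1/c) *s V3" by (simp add: vector_smult_assoc)
    then show False using defined(2) lifts(4) \<open>c \<noteq> 0\<close> unfolding proj_eq_def by auto
  qed
  have n2W: "\<not> proj_eq V2 W"
    by (rule nprop_comb[OF d2 lifts(3) lifts(4) W2' a3])
  have r2: "seg_ratio (chart_pt a V2) (chart_pt a V3) (chart_pt a W)
      = (1 / \<alpha>3) * chart_val a W / ((\<alpha>2 / \<alpha>3) * chart_val a V2)"
    by (rule seg_gen[OF V3e l2 lW l3 _ _ pt_neq[OF l2 lW n2W]]) (use a2 a3 in auto)
  have V4e: "V4 = (- 1 / \<alpha>4) *s W + (\<alpha>1 / \<alpha>4) *s V1"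
    using a4 unfolding W_def vec_eq_iff by (simp add: field_simps)
  have nW1: "\<not> proj_eq W V1"
  proof
    assume "proj_eq W V1"
    then obtain c where "c \<noteq> 0" "W = c *s V1" unfolding proj_eq_def by blast
    then have "V1 = (1/c) *s W" by (simp add: vector_smult_assoc)
    then have "proj_eq V1 W" using \<open>c \<noteq> 0\<close> unfolding proj_eq_def
      by (metis divide_eq_0_iff one_neq_zero)
    moreover have W1: "W = (- \<alpha>4) *s V4 + \<alpha>1 *s V1" using W_def by (simp add: vec_eq_iff)
    have d1: "\<not> proj_eq V4 V1"
    proof
      assume "proj_eq V4 V1"
      then obtain c where "c \<noteq> 0" "V4 = c *s V1" unfolding proj_eq_def by blast
      then have "V1 = (1/c) *s V4" by (simp add: vector_smult_assoc)
      then show False using defined(1) lifts(5) \<open>c \<noteq> 0\<close> unfolding proj_eq_def by auto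
    qed
    have "\<not> proj_eq V1 W"
      by (rule nprop_comb[OF d1 lifts(2) lifts(5) W1]) (use a4 in simp)
    ultimately show False by simp
  qed
  have r3: "seg_ratio (chart_pt a W) (chart_pt a V4) (chart_pt a V1)
      = (\<alpha>1 / \<alpha>4) * chart_val a V1 / ((- 1 / \<alpha>4) * chart_val a W)"
    by (rule seg_gen[OF V4e lW l1 l4 _ _ pt_neq[OF lW l1 nW1]]) (use a1 a4 in auto)
  show ?thesis
    unfolding multi_ratio_def W_def[symmetric] r1 r2 r3
    using a1 a2 a3 a4 l1 l2 lW by (simp add: field_simps)
qed

end
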